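(* For any parity decision tree $T$ on $\{-1,1\}^n$ of depth $d$, $$\mathbf{E}_{\ell\in T}\Big[\Big(\sum_{i=1}^n \ell_i\Big)^2\Big]\le 2d.$$
   Context: A parity decision tree on $\{-1,1\}^n$ is a rooted full binary tree whose internal nodes are labelled by subsets $S\subseteq[n]$, whose two outgoing edges are labelled $-1$ and $1$; an input $x$ follows from a node labelled $S$ the edge labelled $\prod_{i\in S}x_i$, reaching a unique leaf. Depth is the maximum number of internal nodes on a root-to-leaf path. Each leaf is represented as a vector $\ell\in\{-1,0,1\}^n$ where $\ell_i$ is the expected value of $x_i$ over uniformly random inputs $x$ that reach that leaf. $\mathbf{E}_{\ell\in T}$ denotes expectation over the leaf reached by a uniformly random input $x\in\{-1,1\}^n$ (i.e., each leaf weighted by the probability of reaching it). *)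

theory Defs
  imports Complex_Main
begin

text \<open>Parity decision trees. Coordinates are indexed by 0..n-1.
  Node S tm tp : query the parity prod_{i in S} x_i; follow tm on -1, tp on 1.\<close>
datatype pdt = Leaf | Node "nat set" pdt pdt

fun depth :: "pdt \<Rightarrow> nat" where
  "depth Leaf = 0"
| "depth (Node S tm tp) = Suc (max (depth tm) (depth tp))"

fun pdt_on :: "nat \<Rightarrow> pdt \<Rightarrow> bool" where
  "pdt_on n Leaf = True"
| "pdt_on n (Node S tm tp) = (S \<subseteq> {..<n} \<and> pdt_on n tm \<and> pdt_on n tp)"

definition cube :: "nat \<Rightarrow> (nat \<Rightarrow> real) set" where
  "cube n = {x. (\<forall>i<n. x i = -1 \<or> x i = 1) \<and> (\<forall>i\<ge>n. x i = 1)}"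

text \<open>The leaf reached by x, identified by the sequence of edges taken
  (False = edge -1, True = edge 1).\<close>
fun leaf_of :: "pdt \<Rightarrow> (nat \<Rightarrow> real) \<Rightarrow> bool list" where
  "leaf_of Leaf x = []"
| "leaf_of (Node S tm tp) x =
     (if (\<Prod>i\<in>S. x i) = 1 then True # leaf_of tp x else False # leaf_of tm x)"

definition same_leaf :: "nat \<Rightarrow> pdt \<Rightarrow> (nat \<Rightarrow> real) \<Rightarrow> (nat \<Rightarrow> real) set" where
  "same_leaf n T x = {y \<in> cube n. leaf_of T y = leaf_of T x}"

definition leaf_vec :: "nat \<Rightarrow> pdt \<Rightarrow> (nat \<Rightarrow> real) \<Rightarrow> nat \<Rightarrow> real" where
  "leaf_vec n T x i = (\<Sum>y\<in>same_leaf n T x. y i) / real (card (same_leaf n T x))"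

text \<open>E_{l in T}[ (sum_i l_i)^2 ]: expectation over the leaf reached by a uniform input.\<close>
definition leaf_expect_sq :: "nat \<Rightarrow> pdt \<Rightarrow> real" where
  "leaf_expect_sq n T =
     (\<Sum>x\<in>cube n. (\<Sum>i<n. leaf_vec n T x i)^2) / 2 ^ n"

end

theory Submission imports Defs "HOL-Library.FuncSet" begin

definition chi :: "nat set \<Rightarrow> (nat \<Rightarrow> real) \<Rightarrow> real" where
  "chi S y = (\<Prod>i\<in>S. y i)"
definition tmul :: "(nat\<Rightarrow>real) \<Rightarrow> (nat\<Rightarrow>real) \<Rightarrow> (nat\<Rightarrow>real) \<Rightarrow> (nat\<Rightarrow>real)" where
  "tmul u v w = (\<lambda>k. u k * v k * w k)"
definition nice :: "nat \<Rightarrow> (nat\<Rightarrow>real) set \<Rightarrow> bool" where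
  "nice n A \<longleftrightarrow> A \<subseteq> cube n \<and> (\<forall>u\<in>A. \<forall>v\<in>A. \<forall>w\<in>A. tmul u v w \<in> A)"

lemma cube_val: "x \<in> cube n \<Longrightarrow> x i = -1 \<or> x i = 1"
  by (cases "i < n") (auto simp: cube_def)

lemma cube_sq: "x \<in> cube n \<Longrightarrow> x i * x i = 1"
  using cube_val[of x n i] by auto

lemma cube_nz: "x \<in> cube n \<Longrightarrow> x i \<noteq> 0"
  using cube_val[of x n i] by auto

lemma chi_val: assumes "x \<in> cube n" shows "chi S x = -1 \<or> chi S x = 1"
proof (cases "finite S")
  case True
  then show ?thesis
  proof (induction S rule: finite_induct)
    case empty then show ?case by (simp add: chi_def)
  next
    case (insert a F)
    have "chi (insert a F) x = x a * chi F x" using insert by (simp add: chi_def)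
    then show ?case using insert.IH cube_val[OF assms, of a] by auto
  qed
next
  case False then show ?thesis by (simp add: chi_def)
qed

lemma chi_tmul: "chi S (tmul u v w) = chi S u * chi S v * chi S w"
  by (simp add: chi_def tmul_def prod.distrib)

lemma chi_single: "chi {i} y = y i" by (simp add: chi_def)
lemma chi_pair: "i \<noteq> j \<Longrightarrow> chi {i,j} y = y i * y j" by (simp add: chi_def)

lemma cube_eq: "cube n = (\<lambda>f i. if i < n then f i else 1) ` ({..<n} \<rightarrow>\<^sub>E {-1,1})"
proof (intro set_eqI iffI)
  fix x assume x: "x \<in> cube n"
  let ?f = "restrict x {..<n}"
  have "?f \<in> {..<n} \<rightarrow>\<^sub>E {-1,1}" using x by (auto simp: cube_def)
  moreover have "x = (\<lambda>i. if i < n then ?f i else 1)" using x by (auto simp: cube_def)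
  ultimately show "x \<in> (\<lambda>f i. if i < n then f i else 1) ` ({..<n} \<rightarrow>\<^sub>E {-1,1})" by blast
next
  fix x :: "nat \<Rightarrow> real" assume "x \<in> (\<lambda>f i. if i < n then f i else 1) ` ({..<n} \<rightarrow>\<^sub>E {-1,1})"
  then show "x \<in> cube n" by (auto simp: cube_def PiE_def Pi_def)
qed

lemma finite_cube: "finite (cube n)"
  unfolding cube_eq by (intro finite_imageI finite_PiE) auto

lemma card_cube: "card (cube n) = 2 ^ n"
proof -
  have inj: "inj_on (\<lambda>f i. if i < n then f i else (1::real)) ({..<n} \<rightarrow>\<^sub>E {-1,1})"
  proof (rule inj_onI)
    fix f g assume f: "f \<in> {..<n} \<rightarrow>\<^sub>E {-1::real,1}" and g: "g \<in> {..<n} \<rightarrow>\<^sub>E {-1::real,1}"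
      and eq: "(\<lambda>i. if i < n then f i else 1) = (\<lambda>i. if i < n then g i else 1)"
    show "f = g"
    proof
      fix i show "f i = g i"
      proof (cases "i < n")
        case True then show ?thesis using fun_cong[OF eq, of i] by simp
      next
        case False then show ?thesis using f g by (auto simp: PiE_def extensional_def)
      qed
    qed
  qed
  have "card (cube n) = card ({..<n} \<rightarrow>\<^sub>E {-1::real,1})"
    unfolding cube_eq by (rule card_image[OF inj])
  also have "\<dots> = 2 ^ n" by (simp add: card_PiE numeral_2_eq_2)
  finally show ?thesis .
qed

lemma tmul_cube: assumes "u \<in> cube n" "v \<in> cube n" "w \<in> cube n" shows "tmul u v w \<in> cube n"
proof -
  have "u i * v i * w i = -1 \<or> u i * v i * w i = 1" for i
    using cube_val[OF assms(1), of i] cube_val[OF assms(2), of i] cube_val[OF assms(3), of i] by auto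
  moreover have "i \<ge> n \<Longrightarrow> u i * v i * w i = 1" for i using assms by (auto simp: cube_def)
  ultimately show ?thesis by (auto simp: cube_def tmul_def)
qed

lemma nice_cube: "nice n (cube n)"
  by (auto simp: nice_def tmul_cube)

lemma nice_finite: "nice n A \<Longrightarrow> finite A"
  using finite_cube finite_subset by (auto simp: nice_def)

lemma nice_filter: assumes "nice n A" "c * c * c = c"
  shows "nice n {y\<in>A. chi S y = c}"
  using assms by (auto simp: nice_def chi_tmul)

lemma halving:
  assumes A: "nice n A" and u: "u \<in> A" and v: "v \<in> A" and d: "chi S u \<noteq> chi S v"
  shows "card {y\<in>A. chi S y = 1} = card {y\<in>A. chi S y = -1} \<and> sum (chi S) A = 0"
proof -
  have sub: "A \<subseteq> cube n" using A by (simp add: nice_def)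
  have "u \<in> cube n" "v \<in> cube n" using u v sub by auto
  then have a: "chi S u = -1 \<or> chi S u = 1" and b: "chi S v = -1 \<or> chi S v = 1"
    using chi_val by blast+
  have cuv: "chi S u * chi S v = -1"
    using a b d by auto
  define phi where "phi = (\<lambda>y. tmul y u v)"
  have phiA: "y \<in> A \<Longrightarrow> phi y \<in> A" for y using A u v by (auto simp: nice_def phi_def)
  have phichi: "chi S (phi y) = - chi S y" for y
    using cuv by (simp add: phi_def chi_tmul mult.assoc)
  have invol: "y \<in> A \<Longrightarrow> phi (phi y) = y" for y
  proof
    fix k assume "y \<in> A"
    have "u k * u k = 1" "v k * v k = 1" using u v sub cube_sq by auto
    then show "phi (phi y) k = y k" 
      by (simp add: phi_def tmul_def) (metis mult.assoc mult.commute mult_1_right)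
  qed
  have bij: "bij_betw phi {y\<in>A. chi S y = 1} {y\<in>A. chi S y = -1}"
    by (rule bij_betw_byWitness[where f'=phi]) (auto simp: phiA phichi invol)
  have c: "card {y\<in>A. chi S y = 1} = card {y\<in>A. chi S y = -1}"
    using bij_betw_same_card[OF bij] .
  have fin: "finite A" using nice_finite[OF A] .
  have Aeq: "A = {y\<in>A. chi S y = 1} \<union> {y\<in>A. chi S y = -1}"
    using chi_val sub by blast
  have "sum (chi S) A = sum (chi S) {y\<in>A. chi S y = 1} + sum (chi S) {y\<in>A. chi S y = -1}"
    by (subst Aeq, rule sum.union_disjoint) (use fin in auto)
  also have "\<dots> = real (card {y\<in>A. chi S y = 1}) - real (card {y\<in>A. chi S y = -1})"
    by simp
  also have "\<dots> = 0" using c by simp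
  finally show ?thesis using c by simp
qed


definition lset :: "pdt \<Rightarrow> (nat\<Rightarrow>real) set \<Rightarrow> (nat\<Rightarrow>real) \<Rightarrow> (nat\<Rightarrow>real) set" where
  "lset T A x = {y\<in>A. leaf_of T y = leaf_of T x}"

lemma leaf_of_Node': "leaf_of (Node S tm tp) x =
     (if chi S x = 1 then True # leaf_of tp x else False # leaf_of tm x)"
  by (simp add: chi_def)

declare leaf_of.simps(2)[simp del]

lemma leaf_closed:
  "u \<in> cube n \<Longrightarrow> v \<in> cube n \<Longrightarrow> w \<in> cube n \<Longrightarrow> leaf_of T u = leaf_of T v \<Longrightarrow>
   leaf_of T v = leaf_of T w \<Longrightarrow> leaf_of T (tmul u v w) = leaf_of T u"
proof (induction T)
  case Leaf then show ?case by simp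
next
  case (Node S tm tp)
  have vu: "chi S u = -1 \<or> chi S u = 1" "chi S v = -1 \<or> chi S v = 1" "chi S w = -1 \<or> chi S w = 1"
    using chi_val Node.prems by blast+
  show ?case
  proof (cases "chi S u = 1")
    case True
    then have "chi S v = 1" "chi S w = 1" using Node.prems(4,5) by (auto simp: leaf_of_Node' split: if_splits)
    then show ?thesis using True Node.prems Node.IH(2) by (auto simp: leaf_of_Node' chi_tmul)
  next
    case False
    then have "chi S v \<noteq> 1" "chi S w \<noteq> 1" using Node.prems(4,5) by (auto simp: leaf_of_Node' split: if_splits)
    then have "chi S (tmul u v w) \<noteq> 1" using vu False by (simp add: chi_tmul)
    then show ?thesis using False Node.prems Node.IH(1) \<open>chi S v \<noteq> 1\<close> \<open>chi S w \<noteq> 1\<close>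
      by (auto simp: leaf_of_Node')
  qed
qed

lemma nice_lset: "nice n A \<Longrightarrow> nice n (lset T A x)"
  unfolding nice_def lset_def using leaf_closed by auto (metis subsetD)

lemma card_lset: "nice n A \<Longrightarrow> x \<in> A \<Longrightarrow> card A \<le> card (lset T A x) * 2 ^ depth T"
proof (induction T arbitrary: A)
  case Leaf
  then show ?case by (simp add: lset_def)
next
  case (Node S tm tp)
  have sub: "A \<subseteq> cube n" using Node.prems by (simp add: nice_def)
  have fin: "finite A" using nice_finite Node.prems by blast
  let ?Ap = "{y\<in>A. chi S y = 1}" and ?Am = "{y\<in>A. chi S y = -1}"
  have np: "nice n ?Ap" and nm: "nice n ?Am" using nice_filter Node.prems by auto
  have Aeq: "A = ?Ap \<union> ?Am" using chi_val sub by blast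
  have cA: "card A = card ?Ap + card ?Am"
    by (subst Aeq, rule card_Un_disjoint) (use fin in auto)
  have le1: "(2::nat) ^ depth tp \<le> 2 ^ depth (Node S tm tp)" "(2::nat) ^ depth tm \<le> 2 ^ depth (Node S tm tp)"
    by (intro power_increasing; simp)+
  have le2: "2 * (2::nat) ^ depth tp \<le> 2 ^ depth (Node S tm tp)" "2 * (2::nat) ^ depth tm \<le> 2 ^ depth (Node S tm tp)"
    by (auto simp flip: power_Suc intro: power_increasing)
  show ?case
  proof (cases "\<exists>z\<in>A. chi S z \<noteq> chi S x")
    case True
    then obtain z where z: "z \<in> A" "chi S z \<noteq> chi S x" by blast
    have h: "card ?Ap = card ?Am" using halving[OF Node.prems(1) z(1) Node.prems(2)] z(2) by auto
    show ?thesis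
    proof (cases "chi S x = 1")
      case True
      have eq: "lset (Node S tm tp) A x = lset tp ?Ap x"
        using True by (auto simp: lset_def leaf_of_Node' split: if_splits)
      have "card ?Ap \<le> card (lset tp ?Ap x) * 2 ^ depth tp"
        using Node.IH(2)[OF np] Node.prems(2) True by auto
      then have "card A \<le> card (lset tp ?Ap x) * (2 * 2 ^ depth tp)" using cA h by simp
      also have "\<dots> \<le> card (lset tp ?Ap x) * 2 ^ depth (Node S tm tp)"
        using le2 by (intro mult_le_mono2) auto
      finally show ?thesis using eq by simp
    next
      case False
      then have xm: "chi S x = -1" using chi_val sub Node.prems(2) by blast
      have eq: "lset (Node S tm tp) A x = lset tm ?Am x"
        using False xm chi_val sub by (auto simp: lset_def leaf_of_Node' split: if_splits)
      have "card ?Am \<le> card (lset tm ?Am x) * 2 ^ depth tm"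
        using Node.IH(1)[OF nm] Node.prems(2) xm by auto
      then have "card A \<le> card (lset tm ?Am x) * (2 * 2 ^ depth tm)" using cA h by simp
      also have "\<dots> \<le> card (lset tm ?Am x) * 2 ^ depth (Node S tm tp)"
        using le2 by (intro mult_le_mono2) auto
      finally show ?thesis using eq by simp
    qed
  next
    case False
    show ?thesis
    proof (cases "chi S x = 1")
      case True
      have eq: "lset (Node S tm tp) A x = lset tp A x"
        using True False by (auto simp: lset_def leaf_of_Node')
      have "card A \<le> card (lset tp A x) * 2 ^ depth tp" using Node.IH(2)[OF Node.prems] .
      also have "\<dots> \<le> card (lset tp A x) * 2 ^ depth (Node S tm tp)"
        using le1 by (intro mult_le_mono2) auto
      finally show ?thesis using eq by simp
    next
      case F2: False
      have eq: "lset (Node S tm tp) A x = lset tm A x"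
        using F2 False by (auto simp: lset_def leaf_of_Node')
      have "card A \<le> card (lset tm A x) * 2 ^ depth tm" using Node.IH(1)[OF Node.prems] .
      also have "\<dots> \<le> card (lset tm A x) * 2 ^ depth (Node S tm tp)"
        using le1 by (intro mult_le_mono2) auto
      finally show ?thesis using eq by simp
    qed
  qed
qed


definition fixd :: "(nat\<Rightarrow>real) set \<Rightarrow> (nat\<Rightarrow>real) \<Rightarrow> nat \<Rightarrow> bool" where
  "fixd L x i \<longleftrightarrow> (\<forall>y\<in>L. y i = x i)"
definition lnk :: "(nat\<Rightarrow>real) set \<Rightarrow> (nat\<Rightarrow>real) \<Rightarrow> nat \<Rightarrow> nat \<Rightarrow> bool" where
  "lnk L x i j \<longleftrightarrow> (\<forall>y\<in>L. y i * y j = x i * x j)"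

context
  fixes n :: nat and L :: "(nat\<Rightarrow>real) set" and x :: "nat \<Rightarrow> real"
  assumes niceL: "nice n L" and xL: "x \<in> L"
begin

lemma subL: "L \<subseteq> cube n" using niceL by (simp add: nice_def)
lemma finL: "finite L" using nice_finite niceL by blast
lemma xc: "x \<in> cube n" using subL xL by blast
lemma cardL: "card L > 0" using finL xL card_gt_0_iff by blast

lemma avg1: "(\<Sum>y\<in>L. y i) = (if fixd L x i then real (card L) * x i else 0)"
proof (cases "fixd L x i")
  case True
  then have "(\<Sum>y\<in>L. y i) = (\<Sum>y\<in>L. x i)" by (intro sum.cong) (auto simp: fixd_def)
  then show ?thesis using True by simp
next
  case False
  then obtain z where z: "z \<in> L" "z i \<noteq> x i" by (auto simp: fixd_def)
  then have "chi {i} z \<noteq> chi {i} x" by (simp add: chi_single)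
  then have "sum (chi {i}) L = 0" using halving[OF niceL z(1) xL] by blast
  then show ?thesis using False by (simp add: chi_single)
qed

lemma avg2: "(\<Sum>y\<in>L. y i * y j) = (if lnk L x i j then real (card L) * (x i * x j) else 0)"
proof (cases "lnk L x i j")
  case True
  then have "(\<Sum>y\<in>L. y i * y j) = (\<Sum>y\<in>L. x i * x j)" by (intro sum.cong) (auto simp: lnk_def)
  then show ?thesis using True by simp
next
  case False
  then obtain z where z: "z \<in> L" "z i * z j \<noteq> x i * x j" by (auto simp: lnk_def)
  have ij: "i \<noteq> j" using z subL xc cube_sq xL by (metis subsetD)
  then have "chi {i,j} z \<noteq> chi {i,j} x" using z by (simp add: chi_pair)
  then have "sum (chi {i,j}) L = 0" using halving[OF niceL z(1) xL] by blast
  then show ?thesis using False ij by (simp add: chi_pair)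
qed

lemma lnk_refl: "lnk L x i i"
  using subL xc cube_sq by (auto simp: lnk_def)

lemma lnk_sym: "lnk L x i j \<Longrightarrow> lnk L x j i"
  by (auto simp: lnk_def mult.commute)

lemma lnk_trans: assumes "lnk L x i j" "lnk L x j k" shows "lnk L x i k"
  unfolding lnk_def
proof
  fix y assume y: "y \<in> L"
  have yc: "y \<in> cube n" using y subL by blast
  have "y i * y k = (y i * y j) * (y j * y k)" using cube_sq[OF yc, of j]
    by (metis mult.assoc mult.commute mult_1_right)
  also have "\<dots> = (x i * x j) * (x j * x k)" using assms y by (simp add: lnk_def)
  also have "\<dots> = x i * x k" using cube_sq[OF xc, of j]
    by (metis mult.assoc mult.commute mult_1_right)
  finally show "y i * y k = x i * x k" .
qed

lemma fixd_lnk: assumes "fixd L x i" shows "lnk L x i j \<longleftrightarrow> fixd L x j"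
proof
  assume l: "lnk L x i j"
  show "fixd L x j" unfolding fixd_def
  proof
    fix y assume y: "y \<in> L"
    have "y i * y j = x i * x j" "y i = x i" using l assms y by (auto simp: lnk_def fixd_def)
    then show "y j = x j" using cube_nz[OF xc, of i] by simp
  qed
next
  assume "fixd L x j" then show "lnk L x i j" using assms by (auto simp: lnk_def fixd_def)
qed

lemma psi_eq: "(\<Sum>y\<in>L. (\<Sum>i<n. y i)^2) =
   real (card L) * (\<Sum>i<n. \<Sum>j<n. if lnk L x i j then x i * x j else 0)"
proof -
  have "(\<Sum>y\<in>L. (\<Sum>i<n. y i)^2) = (\<Sum>y\<in>L. \<Sum>i<n. \<Sum>j<n. y i * y j)"
    by (simp add: power2_eq_square sum_product)
  also have "\<dots> = (\<Sum>i<n. \<Sum>j<n. \<Sum>y\<in>L. y i * y j)"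
    by (subst sum.swap) (simp add: sum.swap[of _ L])
  also have "\<dots> = (\<Sum>i<n. \<Sum>j<n. real (card L) * (if lnk L x i j then x i * x j else 0))"
    by (intro sum.cong refl) (simp add: avg2)
  also have "\<dots> = real (card L) * (\<Sum>i<n. \<Sum>j<n. if lnk L x i j then x i * x j else 0)"
    by (simp add: sum_distrib_left)
  finally show ?thesis .
qed

end

context
  fixes n :: nat and L :: "(nat\<Rightarrow>real) set" and x :: "nat \<Rightarrow> real"
  assumes niceL: "nice n L" and xL: "x \<in> L"
begin

lemma leaf_ineq:
  assumes big: "2 ^ n \<le> card L * 2 ^ d"
  shows "(\<Sum>i<n. (\<Sum>y\<in>L. y i) / real (card L))^2
     \<le> (\<Sum>i<n. \<Sum>j<n. if lnk L x i j then x i * x j else 0) - (real n - 2 * real d)"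
proof -
  note subL = subL[OF niceL xL] and finL = finL[OF niceL xL] and xc = xc[OF niceL xL]
    and cardL = cardL[OF niceL xL]
  note lrefl = lnk_refl[OF niceL xL] and lsym = lnk_sym[OF niceL xL] and ltrans = lnk_trans[OF niceL xL]
    and flnk = fixd_lnk[OF niceL xL]
  define F where "F = {i\<in>{..<n}. fixd L x i}"
  define N where "N = {i\<in>{..<n}. \<not> fixd L x i}"
  define h where "h = (\<lambda>i j. if lnk L x i j then x i * x j else 0)"
  have finF: "finite F" and finN: "finite N" by (auto simp: F_def N_def)
  have un: "{..<n} = F \<union> N" and dj: "F \<inter> N = {}" by (auto simp: F_def N_def)
  have g: "(\<Sum>i<n. (\<Sum>y\<in>L. y i) / real (card L)) = (\<Sum>i\<in>F. x i)"
  proof -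
    have "(\<Sum>i<n. (\<Sum>y\<in>L. y i) / real (card L)) = (\<Sum>i<n. if fixd L x i then x i else 0)"
      using cardL by (intro sum.cong refl) (simp add: avg1[OF niceL xL])
    also have "\<dots> = (\<Sum>i\<in>F. x i)" unfolding F_def by (rule sum.inter_filter[symmetric]) simp
    finally show ?thesis .
  qed
  have g2: "(\<Sum>i\<in>F. x i)^2 = (\<Sum>i\<in>F. \<Sum>j\<in>F. h i j)"
    unfolding h_def power2_eq_square sum_product
    by (intro sum.cong refl) (auto simp: F_def flnk)
  have split: "(\<Sum>i<n. \<Sum>j<n. h i j) = (\<Sum>i\<in>F. \<Sum>j\<in>F. h i j) + (\<Sum>i\<in>N. \<Sum>j\<in>N. h i j)"
  proof -
    have "(\<Sum>i<n. \<Sum>j<n. h i j) = (\<Sum>i\<in>F. \<Sum>j<n. h i j) + (\<Sum>i\<in>N. \<Sum>j<n. h i j)"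
      unfolding un by (rule sum.union_disjoint) (use finF finN dj in auto)
    also have "(\<Sum>i\<in>F. \<Sum>j<n. h i j) = (\<Sum>i\<in>F. \<Sum>j\<in>F. h i j)"
    proof (rule sum.cong[OF refl])
      fix i assume i: "i \<in> F"
      have "(\<Sum>j<n. h i j) = (\<Sum>j\<in>F. h i j) + (\<Sum>j\<in>N. h i j)"
        unfolding un by (rule sum.union_disjoint) (use finF finN dj in auto)
      moreover have "(\<Sum>j\<in>N. h i j) = 0" using i by (intro sum.neutral) (auto simp: F_def N_def h_def flnk)
      ultimately show "(\<Sum>j<n. h i j) = (\<Sum>j\<in>F. h i j)" by simp
    qed
    also have "(\<Sum>i\<in>N. \<Sum>j<n. h i j) = (\<Sum>i\<in>N. \<Sum>j\<in>N. h i j)"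
    proof (rule sum.cong[OF refl])
      fix i assume i: "i \<in> N"
      have "(\<Sum>j<n. h i j) = (\<Sum>j\<in>F. h i j) + (\<Sum>j\<in>N. h i j)"
        unfolding un by (rule sum.union_disjoint) (use finF finN dj in auto)
      moreover have "(\<Sum>j\<in>F. h i j) = 0"
      proof (rule sum.neutral, rule ballI)
        fix j assume j: "j \<in> F"
        have "\<not> lnk L x i j"
        proof
          assume "lnk L x i j"
          then have "lnk L x j i" by (rule lsym)
          then have "fixd L x i" using flnk j by (auto simp: F_def)
          then show False using i by (simp add: N_def)
        qed
        then show "h i j = 0" by (simp add: h_def)
      qed
      ultimately show "(\<Sum>j<n. h i j) = (\<Sum>j\<in>N. h i j)" by simp
    qed
    finally show ?thesis .
  qed
  define rep where "rep = (\<lambda>k. LEAST j. j \<in> N \<and> lnk L x j k)"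
  define C where "C = (\<lambda>r. {j\<in>N. lnk L x j r})"
  define R where "R = {r\<in>N. \<forall>j\<in>N. lnk L x j r \<longrightarrow> r \<le> j}"
  have finR: "finite R" using finN by (auto simp: R_def)
  have finC: "finite (C r)" for r using finN by (auto simp: C_def)
  have rep1: "rep k \<in> N \<and> lnk L x (rep k) k" if "k \<in> N" for k
    unfolding rep_def by (rule LeastI[of _ k]) (use that lrefl in auto)
  have rep2: "rep k \<in> R" if k: "k \<in> N" for k
  proof -
    have "rep k \<le> j" if "j \<in> N" "lnk L x j (rep k)" for j
      unfolding rep_def by (rule Least_le) (use that rep1[OF k] ltrans in blast)
    then show ?thesis using rep1[OF k] by (auto simp: R_def)
  qed
  have NU: "N = \<Union>(C ` R)"
  proof
    show "N \<subseteq> \<Union>(C ` R)"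
    proof
      fix k assume k: "k \<in> N"
      then have "k \<in> C (rep k)" using rep1[OF k] lsym by (auto simp: C_def)
      then show "k \<in> \<Union>(C ` R)" using rep2[OF k] by blast
    qed
  qed (auto simp: C_def)
  have disj: "\<forall>r\<in>R. \<forall>r'\<in>R. r \<noteq> r' \<longrightarrow> C r \<inter> C r' = {}"
  proof (intro ballI impI)
    fix r r' assume r: "r \<in> R" and r': "r' \<in> R" and ne: "r \<noteq> r'"
    show "C r \<inter> C r' = {}"
    proof (rule ccontr)
      assume "C r \<inter> C r' \<noteq> {}"
      then obtain j where "j \<in> N" "lnk L x j r" "lnk L x j r'" by (auto simp: C_def)
      then have "lnk L x r r'" "lnk L x r' r" using ltrans lsym by blast+
      then have "r \<le> r'" "r' \<le> r" using r r' by (auto simp: R_def)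
      then show False using ne by simp
    qed
  qed
  have P: "(\<Sum>i\<in>N. \<Sum>j\<in>N. h i j) = (\<Sum>r\<in>R. (\<Sum>i\<in>C r. x i)^2)"
  proof -
    have "(\<Sum>i\<in>N. \<Sum>j\<in>N. h i j) = (\<Sum>r\<in>R. \<Sum>i\<in>C r. \<Sum>j\<in>N. h i j)"
      by (subst (1) NU, rule sum.UNION_disjoint) (use finR finC disj in auto)
    also have "\<dots> = (\<Sum>r\<in>R. \<Sum>i\<in>C r. \<Sum>j\<in>C r. x i * x j)"
    proof (rule sum.cong[OF refl], rule sum.cong[OF refl])
      fix r i assume r: "r \<in> R" and i: "i \<in> C r"
      have "(\<Sum>j\<in>C r. x i * x j) = (\<Sum>j\<in>N. if lnk L x j r then x i * x j else 0)"
        unfolding C_def by (rule sum.inter_filter) (rule finN)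
      also have "\<dots> = (\<Sum>j\<in>N. h i j)"
      proof (intro sum.cong refl)
        fix j
        have "lnk L x i r" using i by (simp add: C_def)
        then have "lnk L x j r \<longleftrightarrow> lnk L x i j" using ltrans lsym by blast
        then show "(if lnk L x j r then x i * x j else 0) = h i j" by (simp add: h_def)
      qed
      finally show "(\<Sum>j\<in>N. h i j) = (\<Sum>j\<in>C r. x i * x j)" by simp
    qed
    also have "\<dots> = (\<Sum>r\<in>R. (\<Sum>i\<in>C r. x i)^2)"
      by (simp add: power2_eq_square sum_product)
    finally show ?thesis .
  qed
  have cls: "(\<Sum>i\<in>C r. x i)^2 \<ge> 2 - real (card (C r))" if r: "r \<in> R" for r
  proof (cases "card (C r) \<ge> 2")
    case True
    then have "2 - real (card (C r)) \<le> 0" by simp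
    also have "0 \<le> (\<Sum>i\<in>C r. x i)^2" by simp
    finally show ?thesis .
  next
    case False
    have "r \<in> C r" using r lrefl by (auto simp: C_def R_def)
    then have "card (C r) \<ge> 1" using finC card_0_eq by (metis One_nat_def Suc_leI empty_iff gr0I)
    then have "card (C r) = 1" using False by simp
    then obtain a where "C r = {a}" using card_1_singletonE by blast
    then show ?thesis using cube_sq[OF xc, of a] by (simp add: power2_eq_square)
  qed
  have cN: "card N = (\<Sum>r\<in>R. card (C r))"
    by (subst NU, rule card_UN_disjoint) (use finR finC disj in auto)
  have Pge: "(\<Sum>i\<in>N. \<Sum>j\<in>N. h i j) \<ge> 2 * real (card R) - real (card N)"
  proof -
    have "(\<Sum>r\<in>R. 2 - real (card (C r))) \<le> (\<Sum>r\<in>R. (\<Sum>i\<in>C r. x i)^2)"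
      by (rule sum_mono) (rule cls)
    moreover have "(\<Sum>r\<in>R. 2 - real (card (C r))) = 2 * real (card R) - real (card N)"
      by (simp add: sum_subtractf cN)
    ultimately show ?thesis using P by simp
  qed
  have cNn: "card N \<le> n" using card_mono[of "{..<n}" N] by (auto simp: N_def)
  have cLR: "card L \<le> 2 ^ card R"
  proof -
    have inj: "inj_on (\<lambda>y. restrict y R) L"
    proof (rule inj_onI)
      fix y z assume y: "y \<in> L" and z: "z \<in> L" and e: "restrict y R = restrict z R"
      have yc: "y \<in> cube n" and zc: "z \<in> cube n" using y z subL by auto
      show "y = z"
      proof
        fix k
        show "y k = z k"
        proof (cases "k < n")
          case False then show ?thesis using yc zc by (auto simp: cube_def)
        next
          case True
          show ?thesis
          proof (cases "fixd L x k")
            case True then show ?thesis using y z unfolding fixd_def by metis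
          next
            case False
            then have k: "k \<in> N" using \<open>k < n\<close> by (auto simp: N_def)
            let ?r = "rep k"
            have "y ?r = z ?r" using fun_cong[OF e, of ?r] rep2[OF k] by simp
            moreover have "lnk L x k ?r" using rep1[OF k] lsym by blast
            then have "y k * y ?r = z k * z ?r" using y z by (auto simp: lnk_def)
            ultimately show ?thesis using cube_nz[OF yc, of ?r] by simp
          qed
        qed
      qed
    qed
    have img: "(\<lambda>y. restrict y R) ` L \<subseteq> R \<rightarrow>\<^sub>E {-1,1}"
      using subL cube_val by (fastforce simp: PiE_def Pi_def)
    have "card L \<le> card (R \<rightarrow>\<^sub>E {-1::real,1})"
      by (rule card_inj_on_le[OF inj img]) (use finR in \<open>auto intro: finite_PiE\<close>)
    also have "\<dots> = 2 ^ card R" using finR by (simp add: card_PiE numeral_2_eq_2)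
    finally show ?thesis .
  qed
  have "(2::nat) ^ n \<le> 2 ^ card R * 2 ^ d" using big cLR by (meson le_trans mult_le_mono1)
  then have "(2::nat) ^ n \<le> 2 ^ (card R + d)" by (simp add: power_add)
  then have nRd: "n \<le> card R + d" by simp
  have "(\<Sum>i<n. (\<Sum>y\<in>L. y i) / real (card L))^2 = (\<Sum>i<n. \<Sum>j<n. h i j) - (\<Sum>i\<in>N. \<Sum>j\<in>N. h i j)"
    using g g2 split by simp
  also have "\<dots> \<le> (\<Sum>i<n. \<Sum>j<n. h i j) - (real n - 2 * real d)"
    using Pge cNn nRd by linarith
  finally show ?thesis by (simp add: h_def)
qed

end

lemma avg_partition:
  assumes fin: "finite A"
  shows "(\<Sum>x\<in>A. (\<Sum>y\<in>lset T A x. h y) / real (card (lset T A x))) = (\<Sum>x\<in>A. h x)"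
proof -
  let ?c = "\<lambda>x. real (card (lset T A x))"
  have cpos: "y \<in> A \<Longrightarrow> ?c y > 0" for y
    using fin by (auto simp: lset_def card_gt_0_iff)
  have "(\<Sum>x\<in>A. (\<Sum>y\<in>lset T A x. h y) / ?c x)
      = (\<Sum>x\<in>A. \<Sum>y\<in>A. if leaf_of T y = leaf_of T x then h y / ?c x else 0)"
  proof (rule sum.cong[OF refl])
    fix x assume "x \<in> A"
    have "(\<Sum>y\<in>lset T A x. h y) / ?c x = (\<Sum>y\<in>lset T A x. h y / ?c x)"
      by (simp add: sum_divide_distrib)
    also have "\<dots> = (\<Sum>y\<in>A. if leaf_of T y = leaf_of T x then h y / ?c x else 0)"
      unfolding lset_def by (rule sum.inter_filter[OF fin])
    finally show "(\<Sum>y\<in>lset T A x. h y) / ?c x = (\<Sum>y\<in>A. if leaf_of T y = leaf_of T x then h y / ?c x else 0)" .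
  qed
  also have "\<dots> = (\<Sum>y\<in>A. \<Sum>x\<in>A. if leaf_of T y = leaf_of T x then h y / ?c x else 0)"
    by (rule sum.swap)
  also have "\<dots> = (\<Sum>y\<in>A. \<Sum>x\<in>A. if leaf_of T x = leaf_of T y then h y / ?c y else 0)"
  proof (rule sum.cong[OF refl], rule sum.cong[OF refl])
    fix y x
    show "(if leaf_of T y = leaf_of T x then h y / ?c x else 0) = (if leaf_of T x = leaf_of T y then h y / ?c y else 0)"
      by (cases "leaf_of T x = leaf_of T y") (auto simp: lset_def)
  qed
  also have "\<dots> = (\<Sum>y\<in>A. h y / ?c y * ?c y)"
  proof (rule sum.cong[OF refl])
    fix y assume "y \<in> A"
    have "(\<Sum>x\<in>A. if leaf_of T x = leaf_of T y then h y / ?c y else 0) = (\<Sum>x\<in>lset T A y. h y / ?c y)"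
      unfolding lset_def by (rule sum.inter_filter[OF fin, symmetric])
    also have "\<dots> = h y / ?c y * ?c y" by simp
    finally show "(\<Sum>x\<in>A. if leaf_of T x = leaf_of T y then h y / ?c y else 0) = h y / ?c y * ?c y" .
  qed
  also have "\<dots> = (\<Sum>y\<in>A. h y)"
    using cpos by (intro sum.cong refl) simp
  finally show ?thesis .
qed

lemma sum_f2_cube: "(\<Sum>y\<in>cube n. (\<Sum>i<n. y i)^2) = 2 ^ n * real n"
proof -
  define one :: "nat \<Rightarrow> real" where "one = (\<lambda>_. 1)"
  have oc: "one \<in> cube n" by (simp add: one_def cube_def)
  have l: "lnk (cube n) one i j \<longleftrightarrow> i = j" if "i < n" "j < n" for i j
  proof
    assume lk: "lnk (cube n) one i j"
    show "i = j"
    proof (rule ccontr)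
      assume ne: "i \<noteq> j"
      define z where "z = one(i := -1)"
      have "z \<in> cube n" using that by (auto simp: z_def one_def cube_def)
      then have "z i * z j = one i * one j" using lk by (auto simp: lnk_def)
      then show False using ne by (simp add: z_def one_def)
    qed
  next
    assume "i = j" then show "lnk (cube n) one i j" using lnk_refl[OF nice_cube oc] by simp
  qed
  have "(\<Sum>y\<in>cube n. (\<Sum>i<n. y i)^2) =
     real (card (cube n)) * (\<Sum>i<n. \<Sum>j<n. if lnk (cube n) one i j then one i * one j else 0)"
    by (rule psi_eq[OF nice_cube oc])
  also have "(\<Sum>i<n. \<Sum>j<n. if lnk (cube n) one i j then one i * one j else 0) = (\<Sum>i<n. 1::real)"
  proof (rule sum.cong[OF refl])
    fix i assume i: "i \<in> {..<n}"
    have "(\<Sum>j<n. if lnk (cube n) one i j then one i * one j else 0) = (\<Sum>j<n. if i = j then 1 else 0)"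
      using i l by (intro sum.cong refl) (auto simp: one_def)
    also have "\<dots> = 1" using i by simp
    finally show "(\<Sum>j<n. if lnk (cube n) one i j then one i * one j else 0) = 1" .
  qed
  finally show ?thesis by (simp add: card_cube)
qed

theorem lemma1:
  fixes n d :: nat and T :: pdt
  assumes "pdt_on n T" and "depth T = d"
  shows "leaf_expect_sq n T \<le> 2 * real d"
proof -
  let ?L = "\<lambda>x. lset T (cube n) x"
  let ?f2 = "\<lambda>y::nat\<Rightarrow>real. (\<Sum>i<n. y i)^2"
  have each: "(\<Sum>i<n. leaf_vec n T x i)^2 \<le> (\<Sum>y\<in>?L x. ?f2 y) / real (card (?L x)) - (real n - 2 * real d)"
    if x: "x \<in> cube n" for x
  proof -
    have nl: "nice n (?L x)" by (rule nice_lset[OF nice_cube])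
    have xl: "x \<in> ?L x" using x by (simp add: lset_def)
    have big: "2 ^ n \<le> card (?L x) * 2 ^ d"
      using card_lset[OF nice_cube x, of T] assms(2) by (simp add: card_cube)
    have cp: "card (?L x) > 0" using cardL[OF nl xl] .
    have lv: "(\<Sum>i<n. leaf_vec n T x i) = (\<Sum>i<n. (\<Sum>y\<in>?L x. y i) / real (card (?L x)))"
      by (simp add: leaf_vec_def same_leaf_def lset_def)
    have "(\<Sum>y\<in>?L x. ?f2 y) / real (card (?L x)) = (\<Sum>i<n. \<Sum>j<n. if lnk (?L x) x i j then x i * x j else 0)"
      using psi_eq[OF nl xl] cp by simp
    then show ?thesis using leaf_ineq[OF nl xl big] lv by simp
  qed
  have "(\<Sum>x\<in>cube n. (\<Sum>i<n. leaf_vec n T x i)^2)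
      \<le> (\<Sum>x\<in>cube n. (\<Sum>y\<in>?L x. ?f2 y) / real (card (?L x)) - (real n - 2 * real d))"
    by (rule sum_mono) (rule each)
  also have "\<dots> = (\<Sum>x\<in>cube n. (\<Sum>y\<in>?L x. ?f2 y) / real (card (?L x))) - 2 ^ n * (real n - 2 * real d)"
    by (simp add: sum_subtractf card_cube)
  also have "\<dots> = 2 ^ n * real n - 2 ^ n * (real n - 2 * real d)"
    by (simp add: avg_partition[OF finite_cube] sum_f2_cube)
  also have "\<dots> = 2 ^ n * (2 * real d)" by (simp add: algebra_simps)
  finally have "(\<Sum>x\<in>cube n. (\<Sum>i<n. leaf_vec n T x i)^2) \<le> 2 ^ n * (2 * real d)" .
  then show ?thesis unfolding leaf_expect_sq_def by (simp add: divide_le_eq mult.commute)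
qed

end
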